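(* Let $(T_1,T_2,T_3)$ be an associative Clifford extension over $(V,S^0,S^1)$ with $T_1\neq0$. Then either $\dim V=1$, or $\dim V\le\dim S^0\le4$.
   Context: All spaces are finite-dimensional real Euclidean. For a Euclidean space $X$, $\mathrm{Cl}(X)$ is the Clifford algebra with $x\cdot x=-|x|^2$; a "$\mathrm{Cl}(X)$-module $Y\oplus Z$" is a $\mathbb Z/2$-graded module with $X\cdot Y\subset Z$, $X\cdot Z\subset Y$, $Y\perp Z$, each $x\in X$ acting skew-symmetrically; the action is written $xy$. Let $V\neq0$ be Euclidean and $S^0\oplus S^1$ a nonzero $\mathrm{Cl}(V)$-module. A Clifford extension over $(V,S^0,S^1)$ is a triple of Euclidean spaces $T_1,T_2,T_3$ of equal dimension together with a $\mathrm{Cl}(V)$-module structure on $T_2\oplus T_3$, a $\mathrm{Cl}(S^0)$-module structure on $T_1\oplus T_2$, and a $\mathrm{Cl}(S^1)$-module structure on $T_1\oplus T_3$. It is associative if $(vs^0)t_1=v(s^0t_1)$ for all $v\in V,s^0\in S^0,t_1\in T_1$. *)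

theory Defs
  imports "HOL-Analysis.Analysis"
begin

text \<open>A Cl(X)-module structure on the Z/2-graded space Y (+) Z (orthogonal direct sum of
Euclidean spaces), given by the two halves of the action: m x y = x y in Z for y in Y,
n x z = x z in Y for z in Z.\<close>
definition clifford_module ::
  "('x::real_inner \<Rightarrow> 'y::real_inner \<Rightarrow> 'z::real_inner) \<Rightarrow> ('x \<Rightarrow> 'z \<Rightarrow> 'y) \<Rightarrow> bool" where
  "clifford_module m n \<longleftrightarrow>
     bilinear m \<and> bilinear n \<and>
     (\<forall>x y z. inner (m x y) z = - inner y (n x z)) \<and>
     (\<forall>x y. n x (m x y) = - ((norm x)\<^sup>2 *\<^sub>R y)) \<and>
     (\<forall>x z. m x (n x z) = - ((norm x)\<^sup>2 *\<^sub>R z))"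

text \<open>Clifford extension (T1,T2,T3) over (V,S0,S1), where S0 (+) S1 carries the Cl(V)-module
structure (mV0, mV1).\<close>
definition clifford_extension ::
  "('v::euclidean_space \<Rightarrow> 's0::euclidean_space \<Rightarrow> 's1::euclidean_space) \<Rightarrow> ('v \<Rightarrow> 's1 \<Rightarrow> 's0) \<Rightarrow>
   ('v \<Rightarrow> 't2::euclidean_space \<Rightarrow> 't3::euclidean_space) \<Rightarrow> ('v \<Rightarrow> 't3 \<Rightarrow> 't2) \<Rightarrow>
   ('s0 \<Rightarrow> 't1::euclidean_space \<Rightarrow> 't2) \<Rightarrow> ('s0 \<Rightarrow> 't2 \<Rightarrow> 't1) \<Rightarrow>
   ('s1 \<Rightarrow> 't1 \<Rightarrow> 't3) \<Rightarrow> ('s1 \<Rightarrow> 't3 \<Rightarrow> 't1) \<Rightarrow> bool" where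
  "clifford_extension mV0 mV1 a a' b b' c c' \<longleftrightarrow>
     clifford_module mV0 mV1 \<and>
     DIM('t1) = DIM('t2) \<and> DIM('t2) = DIM('t3) \<and>
     clifford_module a a' \<and> clifford_module b b' \<and> clifford_module c c'"

definition associative_extension ::
  "('v::euclidean_space \<Rightarrow> 's0::euclidean_space \<Rightarrow> 's1::euclidean_space) \<Rightarrow>
   ('v \<Rightarrow> 't2::euclidean_space \<Rightarrow> 't3::euclidean_space) \<Rightarrow>
   ('s0 \<Rightarrow> 't1::euclidean_space \<Rightarrow> 't2) \<Rightarrow> ('s1 \<Rightarrow> 't1 \<Rightarrow> 't3) \<Rightarrow> bool" where
  "associative_extension mV0 a b c \<longleftrightarrow> (\<forall>v s t. c (mV0 v s) t = a v (b s t))"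

end

theory Submission imports Defs begin

lemma cm_inner: "clifford_module m n \<Longrightarrow> inner (m x y) z = - inner y (n x z)"
  unfolding clifford_module_def by blast
lemma cm_inner': "clifford_module m n \<Longrightarrow> inner (n x z) y = - inner z (m x y)"
  by (metis cm_inner inner_commute minus_minus)
lemma cm_inner2: "clifford_module m n \<Longrightarrow> inner y (n x z) = - inner (m x y) z"
  by (simp add: cm_inner)
lemma cm_nm: "clifford_module m n \<Longrightarrow> n x (m x y) = - ((norm x)\<^sup>2 *\<^sub>R y)"
  unfolding clifford_module_def by blast
lemma cm_mn: "clifford_module m n \<Longrightarrow> m x (n x z) = - ((norm x)\<^sup>2 *\<^sub>R z)"
  unfolding clifford_module_def by blast
lemma cm_bm: "clifford_module m n \<Longrightarrow> bilinear m"
  unfolding clifford_module_def by blast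
lemma cm_bn: "clifford_module m n \<Longrightarrow> bilinear n"
  unfolding clifford_module_def by blast

lemma cm_pol1:
  assumes "clifford_module m n"
  shows "n x (m y t) + n y (m x t) = - ((2 * inner x y) *\<^sub>R t)"
proof -
  note bm = cm_bm[OF assms] and bn = cm_bn[OF assms]
  have "n (x+y) (m (x+y) t) = - ((norm (x+y))\<^sup>2 *\<^sub>R t)" by (rule cm_nm[OF assms])
  also have "(norm (x+y))\<^sup>2 = (norm x)\<^sup>2 + 2 * inner x y + (norm y)\<^sup>2"
    by (simp add: power2_norm_eq_inner inner_add_left inner_add_right inner_commute)
  finally have "n x (m x t) + n x (m y t) + (n y (m x t) + n y (m y t))
     = - (((norm x)\<^sup>2 + 2 * inner x y + (norm y)\<^sup>2) *\<^sub>R t)"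
    by (simp add: bilinear_ladd[OF bm] bilinear_ladd[OF bn] bilinear_radd[OF bn] add_ac)
  then show ?thesis
    by (simp add: cm_nm[OF assms] scaleR_add_left algebra_simps eq_neg_iff_add_eq_0)
qed

lemma cm_pol2:
  assumes "clifford_module m n"
  shows "m x (n y t) + m y (n x t) = - ((2 * inner x y) *\<^sub>R t)"
proof -
  note bm = cm_bm[OF assms] and bn = cm_bn[OF assms]
  have "m (x+y) (n (x+y) t) = - ((norm (x+y))\<^sup>2 *\<^sub>R t)" by (rule cm_mn[OF assms])
  also have "(norm (x+y))\<^sup>2 = (norm x)\<^sup>2 + 2 * inner x y + (norm y)\<^sup>2"
    by (simp add: power2_norm_eq_inner inner_add_left inner_add_right inner_commute)
  finally have "m x (n x t) + m x (n y t) + (m y (n x t) + m y (n y t))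
     = - (((norm x)\<^sup>2 + 2 * inner x y + (norm y)\<^sup>2) *\<^sub>R t)"
    by (simp add: bilinear_ladd[OF bm] bilinear_ladd[OF bn] bilinear_radd[OF bm] add_ac)
  then show ?thesis
    by (simp add: cm_mn[OF assms] scaleR_add_left algebra_simps eq_neg_iff_add_eq_0)
qed

lemma cm_orth1: "clifford_module m n \<Longrightarrow> inner x y = 0 \<Longrightarrow> n x (m y t) = - n y (m x t)"
  using cm_pol1[of m n x y t] by (simp add: eq_neg_iff_add_eq_0)
lemma cm_orth2: "clifford_module m n \<Longrightarrow> inner x y = 0 \<Longrightarrow> m x (n y t) = - m y (n x t)"
  using cm_pol2[of m n x y t] by (simp add: eq_neg_iff_add_eq_0)

lemma cm_pol_inner:
  assumes "clifford_module m n"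
  shows "inner (m x y) (m x' z) + inner (m x' y) (m x z) = 2 * inner x x' * inner y z"
proof -
  have "inner (m x y) (m x' z) + inner (m x' y) (m x z)
      = - inner y (n x (m x' z) + n x' (m x z))"
    by (simp add: cm_inner[OF assms] inner_add_right)
  also have "\<dots> = 2 * inner x x' * inner y z"
    by (simp add: cm_pol1[OF assms])
  finally show ?thesis .
qed

lemma cm_norm_m:
  assumes "clifford_module m n" shows "norm (m x y) = norm x * norm y"
proof -
  have "(norm (m x y))\<^sup>2 = (norm x * norm y)\<^sup>2"
    by (simp add: power2_norm_eq_inner[of "m x y"] cm_inner[OF assms] cm_nm[OF assms]
        power_mult_distrib power2_norm_eq_inner[of y])
  then show ?thesis by (simp add: power2_eq_iff_nonneg)
qed

lemma cm_norm_n: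
  assumes "clifford_module m n" shows "norm (n x z) = norm x * norm z"
proof -
  have "(norm (n x z))\<^sup>2 = (norm x * norm z)\<^sup>2"
    by (simp add: power2_norm_eq_inner[of "n x z"] cm_inner'[OF assms] cm_mn[OF assms]
        power_mult_distrib power2_norm_eq_inner[of z])
  then show ?thesis by (simp add: power2_eq_iff_nonneg)
qed

lemma inj_dim: fixes f :: "'a::euclidean_space \<Rightarrow> 'b::euclidean_space"
  assumes "linear f" "\<And>x. norm (f x) = norm x" shows "DIM('a) \<le> DIM('b)"
proof -
  have "inj f"
  proof (rule injI)
    fix x y assume "f x = f y"
    then have "f (x - y) = 0" using assms(1) by (simp add: linear_diff)
    then have "norm (x - y) = 0" using assms(2)[of "x-y"] by simp
    then show "x = y" by simp
  qed
  have "dim (f ` UNIV) = dim (UNIV::'a set)"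
    using assms(1) \<open>inj f\<close> by (intro dim_image_eq) (auto intro: inj_on_subset)
  moreover have "dim (f ` UNIV) \<le> DIM('b)" by (rule dim_subset_UNIV)
  ultimately show ?thesis by simp
qed

lemma unit_orth_exists:
  fixes W :: "'a::euclidean_space set"
  assumes "finite W" "card W < DIM('a)"
  obtains x where "norm x = 1" "\<And>y. y \<in> W \<Longrightarrow> inner x y = 0"
proof -
  have "dim W \<le> card W" using assms(1) by (intro dim_le_card) (auto intro: span_base)
  with assms have "dim W < DIM('a)" by simp
  then obtain x where x: "x \<noteq> 0" "\<And>y. y \<in> span W \<Longrightarrow> orthogonal x y"
    using orthogonal_to_subspace_exists by blast
  show ?thesis
  proof
    show "norm (x /\<^sub>R norm x) = 1" using x(1) by simp
    fix y assume "y \<in> W"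
    then have "inner x y = 0" using x(2)[of y] span_base[of y W] by (simp add: orthogonal_def)
    then show "inner (x /\<^sub>R norm x) y = 0" by simp
  qed
qed

theorem mainTheorem9:
  fixes mV0 :: "'v::euclidean_space \<Rightarrow> 's0::euclidean_space \<Rightarrow> 's1::euclidean_space"
    and mV1 :: "'v \<Rightarrow> 's1 \<Rightarrow> 's0"
    and a :: "'v \<Rightarrow> 't2::euclidean_space \<Rightarrow> 't3::euclidean_space" and a' :: "'v \<Rightarrow> 't3 \<Rightarrow> 't2"
    and b :: "'s0 \<Rightarrow> 't1::euclidean_space \<Rightarrow> 't2" and b' :: "'s0 \<Rightarrow> 't2 \<Rightarrow> 't1"
    and c :: "'s1 \<Rightarrow> 't1 \<Rightarrow> 't3" and c' :: "'s1 \<Rightarrow> 't3 \<Rightarrow> 't1"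
  assumes "clifford_extension mV0 mV1 a a' b b' c c'"
    and "associative_extension mV0 a b c"
  shows "DIM('v) = 1 \<or> (DIM('v) \<le> DIM('s0) \<and> DIM('s0) \<le> 4)"
proof -
  have cV: "clifford_module mV0 mV1" and cA: "clifford_module a a'"
    and cB: "clifford_module b b'" and cC: "clifford_module c c'"
    using assms(1) unfolding clifford_extension_def by auto
  have assoc: "\<And>v s t. c (mV0 v s) t = a v (b s t)"
    using assms(2) unfolding associative_extension_def by auto
  obtain v0 :: 'v where v0B: "v0 \<in> Basis" using nonempty_Basis by blast
  obtain s0 :: 's0 where s0B: "s0 \<in> Basis" using nonempty_Basis by blast
  obtain t :: 't1 where tB: "t \<in> Basis" using nonempty_Basis by blast
  have nv0: "norm v0 = 1" and ns0: "norm s0 = 1" and nt: "norm t = 1"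
    using v0B s0B tB by auto
  have linL: "\<And>h y. bilinear h \<Longrightarrow> linear (\<lambda>x. h x y)" and linR: "\<And>h x. bilinear h \<Longrightarrow> linear (h x)"
    by (auto simp: bilinear_def)
  have dim1: "DIM('v) \<le> DIM('s1)"
    by (rule inj_dim[of "\<lambda>v. mV0 v s0"]) (auto intro: linL cm_bm[OF cV] simp: cm_norm_m[OF cV] ns0)
  have dim2: "DIM('s1) \<le> DIM('s0)"
    by (rule inj_dim[of "mV1 v0"]) (auto intro: linR cm_bn[OF cV] simp: cm_norm_n[OF cV] nv0)
  have "DIM('s0) \<le> 4" if "DIM('v) \<noteq> 1"
  proof (rule ccontr)
    assume "\<not> DIM('s0) \<le> 4"
    then have big: "DIM('s0) \<ge> 5" by simp
    have "card (Basis::'v set) \<ge> 2" using that DIM_positive[where 'a='v] by linarith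
    have "Basis - {v0} \<noteq> {}"
    proof
      assume "Basis - {v0} = {}"
      then have "Basis \<subseteq> {v0}" by blast
      then have "card (Basis::'v set) \<le> card {v0}" by (intro card_mono) auto
      with \<open>card (Basis::'v set) \<ge> 2\<close> show False by simp
    qed
    then obtain v1 :: 'v where v1B: "v1 \<in> Basis" "v1 \<noteq> v0" by blast
    have nv1: "norm v1 = 1" and v01: "inner v0 v1 = 0" using v1B v0B
      by (auto simp: inner_not_same_Basis)
    define J where "J x = - mV1 v0 (mV0 v1 x)" for x
    define K where "K z = - a' v0 (a v1 z)" for z
    define e where "e = J s0"
    have Jskew: "inner (J x) y = - inner x (J y)" for x y
    proof -
      have "inner (J x) y = inner (mV0 v1 x) (mV0 v0 y)"
        unfolding J_def by (simp add: cm_inner'[OF cV])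
      moreover have "inner x (J y) = inner (mV0 v0 x) (mV0 v1 y)"
        unfolding J_def by (simp add: cm_inner2[OF cV])
      moreover have "inner (mV0 v1 x) (mV0 v0 y) + inner (mV0 v0 x) (mV0 v1 y) = 0"
        using cm_pol_inner[OF cV, of v1 x v0 y] v01 by (simp add: inner_commute)
      ultimately show ?thesis by linarith
    qed
    have Jx0: "inner (J x) x = 0" for x using Jskew[of x x] by (simp add: inner_commute)
    have nJ: "norm (J x) = norm x" for x
      unfolding J_def by (simp add: cm_norm_n[OF cV] cm_norm_m[OF cV] nv0 nv1)
    have Kskew: "inner (K y) z = - inner y (K z)" for y z
    proof -
      have "inner (K y) z = inner (a v1 y) (a v0 z)"
        unfolding K_def by (simp add: cm_inner'[OF cA])
      moreover have "inner y (K z) = inner (a v0 y) (a v1 z)"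
        unfolding K_def by (simp add: cm_inner2[OF cA])
      moreover have "inner (a v1 y) (a v0 z) + inner (a v0 y) (a v1 z) = 0"
        using cm_pol_inner[OF cA, of v1 y v0 z] v01 by (simp add: inner_commute)
      ultimately show ?thesis by linarith
    qed
    have K1: "b (J x) w = K (b x w)" for x w
    proof -
      have "mV0 v0 (J x) = mV0 v1 x"
        unfolding J_def by (simp add: bilinear_rneg[OF cm_bm[OF cV]] cm_mn[OF cV] nv0)
      then have "a v0 (b (J x) w) = a v1 (b x w)" using assoc by metis
      then have "a' v0 (a v0 (b (J x) w)) = a' v0 (a v1 (b x w))" by simp
      then have "- b (J x) w = a' v0 (a v1 (b x w))" by (simp add: cm_nm[OF cA] nv0)
      then show ?thesis unfolding K_def by (metis minus_minus)
    qed
    have K2: "b' (J x) z = - b' x (K z)" for x z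
    proof -
      have "inner w (b' (J x) z) = inner w (- b' x (K z))" for w
      proof -
        have "inner w (b' (J x) z) = - inner (b (J x) w) z"
          by (simp add: cm_inner[OF cB])
        also have "\<dots> = - inner (K (b x w)) z" by (simp add: K1)
        also have "\<dots> = inner (b x w) (K z)" by (simp add: Kskew)
        also have "\<dots> = inner w (- b' x (K z))" by (simp add: cm_inner[OF cB])
        finally show ?thesis .
      qed
      then show ?thesis using vector_eq_ldot by blast
    qed
    have Kneg: "K (- z) = - K z" for z
      unfolding K_def by (simp add: bilinear_rneg[OF cm_bm[OF cA]] bilinear_rneg[OF cm_bn[OF cA]])
    have K3: "K z = - b e (b' s0 z)" for z
    proof -
      have "b e (b' s0 z) = K (b s0 (b' s0 z))" unfolding e_def by (rule K1)
      also have "\<dots> = - K z" by (simp add: cm_mn[OF cB] ns0 Kneg)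
      finally show ?thesis by simp
    qed
    have ne: "norm e = 1" unfolding e_def by (simp add: nJ ns0)
    have es0: "inner e s0 = 0" unfolding e_def by (rule Jx0)
    obtain s where ns: "norm s = 1" and sW: "\<And>y. y \<in> {s0, e} \<Longrightarrow> inner s y = 0"
    proof -
      have "card {s0, e} \<le> 2" by (simp add: card_insert_if)
      with big have "card {s0, e} < DIM('s0)" by linarith
      then show ?thesis using unit_orth_exists[of "{s0, e}"] that by blast
    qed
    obtain s' where ns': "norm s' = 1" and s'W: "\<And>y. y \<in> {s0, e, s, J s} \<Longrightarrow> inner s' y = 0"
    proof -
      have "card {s0, e, s, J s} \<le> 4" by (simp add: card_insert_if)
      with big have "card {s0, e, s, J s} < DIM('s0)" by linarith
      then show ?thesis using unit_orth_exists[of "{s0, e, s, J s}"] that by blast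
    qed
    define f where "f = J s"
    have o1: "inner f s' = 0" using s'W[of "J s"] by (simp add: f_def inner_commute)
    have o2: "inner s e = 0" "inner s s0 = 0" using sW by auto
    have o3: "inner s' e = 0" "inner s' s0 = 0" "inner s s' = 0"
      using s'W[of e] s'W[of s0] s'W[of s] by (auto simp: inner_commute)
    have bm: "bilinear b" and bn: "bilinear b'" using cm_bm[OF cB] cm_bn[OF cB] .
    define U where "U = b' s (b s' t)"
    have E1: "b' f (b s' t) + b' s' (b f t) = 0"
      using cm_pol1[OF cB, of f s' t] o1 by simp
    have E2: "b' f (b s' t) = b' s (b e (b' s0 (b s' t)))"
      unfolding f_def by (simp add: K2 K3 bilinear_rneg[OF bn])
    have E3: "b' s' (b f t) = - b' s' (b e (b' s0 (b s t)))"
      unfolding f_def by (simp add: K1 K3 bilinear_rneg[OF bn])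
    have E4: "b' s (b e (b' s0 (b s' t))) = b' e (b s0 U)"
    proof -
      have "b' s (b e (b' s0 (b s' t))) = - b' e (b s (b' s0 (b s' t)))"
        using cm_orth1[OF cB o2(1)] by blast
      also have "b s (b' s0 (b s' t)) = - b s0 (b' s (b s' t))"
        using cm_orth2[OF cB o2(2)] by blast
      finally show ?thesis by (simp add: U_def bilinear_rneg[OF bn])
    qed
    have E5: "b' s' (b e (b' s0 (b s t))) = - b' e (b s0 U)"
    proof -
      have "b' s' (b e (b' s0 (b s t))) = - b' e (b s' (b' s0 (b s t)))"
        using cm_orth1[OF cB o3(1)] by blast
      also have "b s' (b' s0 (b s t)) = - b s0 (b' s' (b s t))"
        using cm_orth2[OF cB o3(2)] by blast
      also have "b' s' (b s t) = - U"
        unfolding U_def using cm_orth1[OF cB, of s' s t] o3(3) by (simp add: inner_commute)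
      finally show ?thesis by (simp add: bilinear_rneg[OF bn] bilinear_rneg[OF bm])
    qed
    from E1 E2 E3 E4 E5 have "b' e (b s0 U) + b' e (b s0 U) = 0" by simp
    then have "2 *\<^sub>R b' e (b s0 U) = 0" by (simp add: scaleR_2)
    then have "b' e (b s0 U) = 0" by simp
    moreover have "norm (b' e (b s0 U)) = 1"
      by (simp add: U_def cm_norm_n[OF cB] cm_norm_m[OF cB] ne ns0 ns ns' nt)
    ultimately show False by simp
  qed
  then show ?thesis using dim1 dim2 by linarith
qed

end
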